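(* In the baseline diffusion model described in the context, once an individual consumes the new product he consumes it in every later period: for every $t\ge 1$, $D_n^{t-1}\subseteq D_n^{t}$. Equivalently, if $i\in D_n^{t}$ then $i\in D_n^{t'}$ for all $t'\ge t$.
   Context: Baseline diffusion model. There are $N\ge 2$ individuals $i\in\{1,\dots,N\}$ and two products, an incumbent $p_c$ and a new product $p_n$. The individuals are partitioned into $G\ge 2$ nonempty groups $N_1,\dots,N_G$ (the symbol $N_k$ also denotes the group's cardinality). Every member of group $N_k$ has the same aspiration level $H_{N_k}$, and $H_{N_1}>H_{N_2}>\cdots>H_{N_G}$; write $H_i$ for the aspiration level of individual $i$. Consuming $p_c$ gives every individual the payoff $v_L$, where $H_{N_2}<v_L<H_{N_1}$. Consuming $p_n$ gives individual $i$ the payoff $v_{Hi}$, where $v_{Hi}\ge H_{N_1}$ for all $i$. Product similarities are $s_{p_c,p_c}=s_{p_n,p_n}=1$, $s_{p_n,p_c}=s_p\in(0,1)$ and $s_{p_c,p_n}=0$. Individual similarities are $s_{i,i}=1$ and $s_{i,j}=s\in(0,1]$ for $i\neq j$. Dynamics. Time is $t=0,1,2,\dots$. In period $0$ everyone consumes $p_c$, i.e. $D_c^0=\{1,\dots,N\}$ and $D_n^0=\emptyset$. For $t\ge1$, individual $i$'s evaluations are $U_i^t(p_c)=\sum_{t'=0}^{t-1}\sum_{j\in D_c^{t'}} s_{i,j}(v_L-H_i)$ and $U_i^t(p_n)=s_p\,U_i^t(p_c)+\sum_{t'=0}^{t-1}\sum_{j\in D_n^{t'}} s_{i,j}(v_{Hj}-H_i)$.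 These are the sums $\sum s_{i,j}s_{p,p'}(v-H_i)$ over all past consumption cases $(j,p',v)$, one case per individual per past period. Individual $i$ consumes $p_n$ in period $t$ (i.e. $i\in D_n^t$) if $U_i^t(p_n)>U_i^t(p_c)$; otherwise he consumes $p_c$ (i.e. $i\in D_c^t$). Thus $D_c^t$ and $D_n^t$ partition $\{1,\dots,N\}$, and $|D|$ denotes the cardinality of a set $D$. *)

theory Defs
  imports Main "HOL.Real"
begin

text \<open>Individuals are 1..N. Group membership is a function
  grp from individuals to group indices 1..G; the aspiration level of group k is Hg k,
  and the aspiration level of individual i is Hi i = Hg (grp i).
  A history is a list of the sets of consumers of the new product in periods 0,1,...;
  the consumers of the incumbent in a period are the complement within 1..N.\<close>

definition sim :: "real \<Rightarrow> nat \<Rightarrow> nat \<Rightarrow> real" where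
  "sim s i j = (if i = j then 1 else s)"

definition Uinc :: "nat \<Rightarrow> (nat \<Rightarrow> real) \<Rightarrow> real \<Rightarrow> real \<Rightarrow> nat set list \<Rightarrow> nat \<Rightarrow> real" where
  "Uinc N Hi vL s hs i =
     (\<Sum>t'<length hs. \<Sum>j\<in>{1..N} - hs ! t'. sim s i j * (vL - Hi i))"

definition Unew :: "nat \<Rightarrow> (nat \<Rightarrow> real) \<Rightarrow> real \<Rightarrow> (nat \<Rightarrow> real) \<Rightarrow> real \<Rightarrow> real
                  \<Rightarrow> nat set list \<Rightarrow> nat \<Rightarrow> real" where
  "Unew N Hi vL vH sp s hs i =
     sp * Uinc N Hi vL s hs i + (\<Sum>t'<length hs. \<Sum>j\<in>hs ! t'. sim s i j * (vH j - Hi i))"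

definition next_Dn :: "nat \<Rightarrow> (nat \<Rightarrow> real) \<Rightarrow> real \<Rightarrow> (nat \<Rightarrow> real) \<Rightarrow> real \<Rightarrow> real
                  \<Rightarrow> nat set list \<Rightarrow> nat set" where
  "next_Dn N Hi vL vH sp s hs =
     {i \<in> {1..N}. Unew N Hi vL vH sp s hs i > Uinc N Hi vL s hs i}"

text \<open>hist t = [D_n^0, ..., D_n^t].\<close>
primrec hist :: "nat \<Rightarrow> (nat \<Rightarrow> real) \<Rightarrow> real \<Rightarrow> (nat \<Rightarrow> real) \<Rightarrow> real \<Rightarrow> real
                  \<Rightarrow> nat \<Rightarrow> nat set list" where
  "hist N Hi vL vH sp s 0 = [{}]"
| "hist N Hi vL vH sp s (Suc t) =
     hist N Hi vL vH sp s t @ [next_Dn N Hi vL vH sp s (hist N Hi vL vH sp s t)]"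

definition Dn :: "nat \<Rightarrow> (nat \<Rightarrow> real) \<Rightarrow> real \<Rightarrow> (nat \<Rightarrow> real) \<Rightarrow> real \<Rightarrow> real
                  \<Rightarrow> nat \<Rightarrow> nat set" where
  "Dn N Hi vL vH sp s t = hist N Hi vL vH sp s t ! t"

definition Dc :: "nat \<Rightarrow> (nat \<Rightarrow> real) \<Rightarrow> real \<Rightarrow> (nat \<Rightarrow> real) \<Rightarrow> real \<Rightarrow> real
                  \<Rightarrow> nat \<Rightarrow> nat set" where
  "Dc N Hi vL vH sp s t = {1..N} - Dn N Hi vL vH sp s t"

definition baseline_model ::
  "nat \<Rightarrow> nat \<Rightarrow> (nat \<Rightarrow> nat) \<Rightarrow> (nat \<Rightarrow> real) \<Rightarrow> real \<Rightarrow> (nat \<Rightarrow> real) \<Rightarrow> real \<Rightarrow> real \<Rightarrow> bool"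
  where
  "baseline_model N G grp Hg vL vH sp s \<longleftrightarrow>
     N \<ge> 2 \<and> G \<ge> 2 \<and>
     grp ` {1..N} = {1..G} \<and>
     (\<forall>a b. 1 \<le> a \<and> a < b \<and> b \<le> G \<longrightarrow> Hg b < Hg a) \<and>
     Hg 2 < vL \<and> vL < Hg 1 \<and>
     (\<forall>i\<in>{1..N}. vH i \<ge> Hg 1) \<and>
     0 < sp \<and> sp < 1 \<and> 0 < s \<and> s \<le> 1"

end

theory Submission
  imports Defs
begin

lemma hist_len: "length (hist N Hi vL vH sp s t) = Suc t"
  by (induction t) auto

lemma hist_nth: "k \<le> t \<Longrightarrow> hist N Hi vL vH sp s t ! k = Dn N Hi vL vH sp s k"
proof (induction t)
  case 0 then show ?case by (simp add: Dn_def)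
next
  case (Suc t)
  show ?case
  proof (cases "k = Suc t")
    case True then show ?thesis by (simp add: Dn_def)
  next
    case False
    then have "k \<le> t" using Suc.prems by simp
    then show ?thesis using Suc.IH by (simp add: nth_append hist_len)
  qed
qed

lemma Dn_Suc: "Dn N Hi vL vH sp s (Suc t) = next_Dn N Hi vL vH sp s (hist N Hi vL vH sp s t)"
  by (simp add: Dn_def nth_append hist_len)

lemma Dn_0: "Dn N Hi vL vH sp s 0 = {}"
  by (simp add: Dn_def)

lemma Dn_sub: "Dn N Hi vL vH sp s t \<subseteq> {1..N}"
  by (cases t) (auto simp: Dn_0 Dn_Suc next_Dn_def)

definition inc :: "nat \<Rightarrow> (nat \<Rightarrow> real) \<Rightarrow> real \<Rightarrow> (nat \<Rightarrow> real) \<Rightarrow> real \<Rightarrow> real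
                  \<Rightarrow> nat set \<Rightarrow> nat \<Rightarrow> real" where
  "inc N Hi vL vH sp s D i = (\<Sum>j\<in>{1..N}. if j \<in> D then sim s i j * (vH j - Hi i)
       else (sp - 1) * (sim s i j * (vL - Hi i)))"

lemma diff_sum:
  assumes "\<forall>k<length hs. hs ! k \<subseteq> {1..N}"
  shows "Unew N Hi vL vH sp s hs i - Uinc N Hi vL s hs i
       = (\<Sum>k<length hs. inc N Hi vL vH sp s (hs ! k) i)"
proof -
  have "Unew N Hi vL vH sp s hs i - Uinc N Hi vL s hs i
      = (sp - 1) * Uinc N Hi vL s hs i + (\<Sum>t'<length hs. \<Sum>j\<in>hs ! t'. sim s i j * (vH j - Hi i))"
    by (simp add: Unew_def algebra_simps)
  also have "\<dots> = (\<Sum>k<length hs. (\<Sum>j\<in>{1..N} - hs ! k. (sp - 1) * (sim s i j * (vL - Hi i)))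
        + (\<Sum>j\<in>hs ! k. sim s i j * (vH j - Hi i)))"
    by (simp add: Uinc_def sum_distrib_left sum.distrib)
  also have "\<dots> = (\<Sum>k<length hs. inc N Hi vL vH sp s (hs ! k) i)"
  proof (rule sum.cong[OF refl])
    fix k assume "k \<in> {..<length hs}"
    then have sub: "hs ! k \<subseteq> {1..N}" using assms by auto
    have a: "{1..N} \<inter> {j. j \<in> hs ! k} = hs ! k" using sub by auto
    have b: "{1..N} \<inter> - {j. j \<in> hs ! k} = {1..N} - hs ! k" by auto
    show "(\<Sum>j\<in>{1..N} - hs ! k. (sp - 1) * (sim s i j * (vL - Hi i)))
        + (\<Sum>j\<in>hs ! k. sim s i j * (vH j - Hi i)) = inc N Hi vL vH sp s (hs ! k) i"
      unfolding inc_def sum.If_cases[OF finite_atLeastAtMost] a b by simp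
  qed
  finally show ?thesis .
qed

lemma Delta:
  "Unew N Hi vL vH sp s (hist N Hi vL vH sp s t) i - Uinc N Hi vL s (hist N Hi vL vH sp s t) i
   = (\<Sum>k<Suc t. inc N Hi vL vH sp s (Dn N Hi vL vH sp s k) i)"
proof -
  have "\<forall>k<length (hist N Hi vL vH sp s t). hist N Hi vL vH sp s t ! k \<subseteq> {1..N}"
    using Dn_sub by (simp add: hist_len hist_nth)
  then show ?thesis by (simp add: diff_sum hist_len hist_nth)
qed

lemma mem_Dn_Suc:
  "i \<in> Dn N Hi vL vH sp s (Suc t) \<longleftrightarrow> i \<in> {1..N} \<and>
     (\<Sum>k<Suc t. inc N Hi vL vH sp s (Dn N Hi vL vH sp s k) i) > 0"
proof -
  have "i \<in> Dn N Hi vL vH sp s (Suc t) \<longleftrightarrow> i \<in> {1..N} \<and>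
     Unew N Hi vL vH sp s (hist N Hi vL vH sp s t) i - Uinc N Hi vL s (hist N Hi vL vH sp s t) i > 0"
    by (simp add: Dn_Suc next_Dn_def)
  then show ?thesis by (simp add: Delta)
qed

lemma chain_le: "(\<forall>k<t. f k \<subseteq> f (Suc k)) \<Longrightarrow> k \<le> t \<Longrightarrow> f k \<subseteq> (f t :: 'a set)"
proof (induction t)
  case 0 then show ?case by simp
next
  case (Suc t)
  show ?case
  proof (cases "k = Suc t")
    case True then show ?thesis by simp
  next
    case False then have "f k \<subseteq> f t" using Suc by simp
    then show ?thesis using Suc.prems(1) by blast
  qed
qed

lemma inc_nonneg:
  assumes "vL \<le> Hi i" "\<forall>j\<in>{1..N}. Hi i \<le> vH j" "sp < 1" "0 < s"
  shows "0 \<le> inc N Hi vL vH sp s D i"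
  unfolding inc_def
proof (rule sum_nonneg)
  fix j assume j: "j \<in> {1..N}"
  have sj: "0 \<le> sim s i j" using assms by (simp add: sim_def)
  have "0 \<le> sim s i j * (vH j - Hi i)" using sj assms j by simp
  moreover have "0 \<le> (sp - 1) * (sim s i j * (vL - Hi i))"
    using sj assms by (intro mult_nonpos_nonpos) (auto intro: mult_nonneg_nonpos)
  ultimately show "0 \<le> (if j \<in> D then sim s i j * (vH j - Hi i)
       else (sp - 1) * (sim s i j * (vL - Hi i)))" by simp
qed

lemma inc_mono:
  assumes "Hi i \<le> vL" "\<forall>j\<in>{1..N}. Hi i \<le> vH j" "sp < 1" "0 < s" "D \<subseteq> E"
  shows "inc N Hi vL vH sp s D i \<le> inc N Hi vL vH sp s E i"
  unfolding inc_def
proof (rule sum_mono)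
  fix j assume j: "j \<in> {1..N}"
  have sj: "0 \<le> sim s i j" using assms by (simp add: sim_def)
  have "0 \<le> sim s i j * (vH j - Hi i)" using sj assms j by simp
  moreover have "(sp - 1) * (sim s i j * (vL - Hi i)) \<le> 0"
    using sj assms by (intro mult_nonpos_nonneg) auto
  ultimately show "(if j \<in> D then sim s i j * (vH j - Hi i)
       else (sp - 1) * (sim s i j * (vL - Hi i))) \<le> (if j \<in> E then sim s i j * (vH j - Hi i)
       else (sp - 1) * (sim s i j * (vL - Hi i)))" using assms(5) by auto
qed

lemma Dn_mono_step:
  assumes HiB: "\<forall>i\<in>{1..N}. \<forall>j\<in>{1..N}. Hi i \<le> vH j" and sp: "sp < 1" and s: "0 < s"
  shows "\<forall>k<t. Dn N Hi vL vH sp s k \<subseteq> Dn N Hi vL vH sp s (Suc k)"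
proof (induction t)
  case 0 then show ?case by simp
next
  case (Suc t)
  let ?D = "Dn N Hi vL vH sp s"
  let ?f = "\<lambda>k. inc N Hi vL vH sp s (?D k) i"
  have ch: "\<And>k. k \<le> t \<Longrightarrow> ?D k \<subseteq> ?D t" using chain_le[OF Suc.IH] by blast
  have "?D t \<subseteq> ?D (Suc t)"
  proof (cases t)
    case 0 then show ?thesis by (simp add: Dn_0)
  next
    case (Suc m)
    show ?thesis
    proof
      fix i assume "i \<in> ?D t"
      then have i: "i \<in> {1..N}" and pos: "(\<Sum>k<Suc m. inc N Hi vL vH sp s (?D k) i) > 0"
        using Suc mem_Dn_Suc by auto
      have hb: "\<forall>j\<in>{1..N}. Hi i \<le> vH j" using HiB i by blast
      have "(\<Sum>k<Suc t. inc N Hi vL vH sp s (?D k) i) > 0"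
      proof (cases "vL \<le> Hi i")
        case True
        have "0 \<le> inc N Hi vL vH sp s (?D t) i" using inc_nonneg[of vL Hi i N vH sp s, OF True hb sp s] .
        then show ?thesis using pos Suc by simp
      next
        case False
        then have le: "Hi i \<le> vL" by simp
        have "(\<Sum>k<Suc m. inc N Hi vL vH sp s (?D k) i) \<le> (\<Sum>k<Suc m. inc N Hi vL vH sp s (?D t) i)"
        proof (rule sum_mono)
          fix k assume "k \<in> {..<Suc m}"
          then have "?D k \<subseteq> ?D t" using ch Suc by simp
          then show "inc N Hi vL vH sp s (?D k) i \<le> inc N Hi vL vH sp s (?D t) i"
            using inc_mono[of Hi i vL N vH sp s, OF le hb sp s] by blast
        qed
        then have "0 < real (Suc m) * inc N Hi vL vH sp s (?D t) i" using pos by simp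
        then have "0 < inc N Hi vL vH sp s (?D t) i" by (simp add: zero_less_mult_iff)
        then show ?thesis using pos Suc by simp
      qed
      then show "i \<in> ?D (Suc t)" using i mem_Dn_Suc by blast
    qed
  qed
  then show ?case using Suc.IH less_Suc_eq by auto
qed

theorem lemma1:
  fixes N G :: nat and grp :: "nat \<Rightarrow> nat" and Hg vH :: "nat \<Rightarrow> real"
    and vL sp s :: real
  assumes "baseline_model N G grp Hg vL vH sp s"
  defines "Hi \<equiv> (\<lambda>i. Hg (grp i))"
  shows "(\<forall>t\<ge>1. Dn N Hi vL vH sp s (t - 1) \<subseteq> Dn N Hi vL vH sp s t)
       \<and> (\<forall>i t t'. i \<in> Dn N Hi vL vH sp s t \<and> t \<le> t' \<longrightarrow> i \<in> Dn N Hi vL vH sp s t')"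
proof -
  note bm = assms(1)[unfolded baseline_model_def]
  have im: "grp ` {1..N} = {1..G}" and dec: "\<forall>a b. 1 \<le> a \<and> a < b \<and> b \<le> G \<longrightarrow> Hg b < Hg a"
    and vh: "\<forall>i\<in>{1..N}. vH i \<ge> Hg 1" and sp: "sp < 1" and s: "0 < s"
    using bm by blast+
  have HiB: "\<forall>i\<in>{1..N}. \<forall>j\<in>{1..N}. Hi i \<le> vH j"
  proof (intro ballI)
    fix i j assume i: "i \<in> {1..N}" and j: "j \<in> {1..N}"
    have g: "grp i \<in> {1..G}" using im i by blast
    have "Hg (grp i) \<le> Hg 1"
    proof (cases "grp i = 1")
      case False
      then have "1 \<le> (1::nat) \<and> 1 < grp i \<and> grp i \<le> G" using g by auto
      then have "Hg (grp i) < Hg 1" using dec by blast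
      then show ?thesis by simp
    qed simp
    moreover have "Hg 1 \<le> vH j" using vh j by blast
    ultimately show "Hi i \<le> vH j" unfolding Hi_def by simp
  qed
  have step: "\<And>t. Dn N Hi vL vH sp s t \<subseteq> Dn N Hi vL vH sp s (Suc t)"
    using Dn_mono_step[OF HiB sp s] by blast
  have A: "\<forall>t\<ge>1. Dn N Hi vL vH sp s (t - 1) \<subseteq> Dn N Hi vL vH sp s t"
    proof (intro allI impI)
    fix t :: nat assume "t \<ge> 1"
    then have "t = Suc (t - 1)" by simp
    then show "Dn N Hi vL vH sp s (t - 1) \<subseteq> Dn N Hi vL vH sp s t" using step[of "t - 1"] by simp
  qed
  have B: "\<forall>i t t'. i \<in> Dn N Hi vL vH sp s t \<and> t \<le> t' \<longrightarrow> i \<in> Dn N Hi vL vH sp s t'"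
  proof (intro allI impI)
    fix i t t' assume h: "i \<in> Dn N Hi vL vH sp s t \<and> t \<le> t'"
    have "Dn N Hi vL vH sp s t \<subseteq> Dn N Hi vL vH sp s t'"
      using chain_le[of t' "Dn N Hi vL vH sp s" t] step h by blast
    then show "i \<in> Dn N Hi vL vH sp s t'" using h by blast
  qed
  show ?thesis using A B by blast
qed

end
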